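(* Let $D\subset S^2$ be a convex body of constant diameter $\delta$. Then every two diametral chords of $D$ intersect.
   Context: $S^2$ is the unit sphere in $E^3$; for non-antipodal points $a,b$, the arc $ab$ is the shorter great-circle arc joining them and $|ab|$ is its length. A set containing no pair of antipodes is convex if it contains the arc joining any two of its points; a closed convex set with non-empty interior is a convex body. If $D$ has diameter $\delta$, an arc $pq$ with $p,q\in D$ and $|pq|=\delta$ is called a diametral chord of $D$. $D$ is of constant diameter $\delta$ if for every $p\in\mathrm{bd}(D)$ there exists $p'\in\mathrm{bd}(D)$ with $|pp'|=\delta$. *)

theory Defs
  imports "HOL-Analysis.Analysis"
begin

type_synonym R3 = "real ^ 3"

definition S2 :: "R3 set" where
  "S2 = sphere 0 1"

definition sdist :: "R3 \<Rightarrow> R3 \<Rightarrow> real" where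
  "sdist a b = arccos (a \<bullet> b)"

text \<open>The shorter great-circle arc joining non-antipodal a, b of S^2:
  the radial projection of the Euclidean segment onto the sphere.\<close>
definition sarc :: "R3 \<Rightarrow> R3 \<Rightarrow> R3 set" where
  "sarc a b = (\<lambda>x. x /\<^sub>R norm x) ` closed_segment a b"

definition no_antipodes :: "R3 set \<Rightarrow> bool" where
  "no_antipodes D \<longleftrightarrow> (\<forall>p\<in>D. - p \<notin> D)"

definition sconvex :: "R3 set \<Rightarrow> bool" where
  "sconvex D \<longleftrightarrow> D \<subseteq> S2 \<and> no_antipodes D \<and> (\<forall>a\<in>D. \<forall>b\<in>D. sarc a b \<subseteq> D)"

definition sinterior :: "R3 set \<Rightarrow> R3 set" where
  "sinterior D = {p \<in> D. \<exists>e>0. S2 \<inter> ball p e \<subseteq> D}"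

definition sboundary :: "R3 set \<Rightarrow> R3 set" where
  "sboundary D = closure D \<inter> S2 - sinterior D"

definition sconvex_body :: "R3 set \<Rightarrow> bool" where
  "sconvex_body D \<longleftrightarrow> sconvex D \<and> closed D \<and> sinterior D \<noteq> {}"

definition sdiameter :: "R3 set \<Rightarrow> real" where
  "sdiameter D = Sup {sdist p q | p q. p \<in> D \<and> q \<in> D}"

definition const_diameter :: "R3 set \<Rightarrow> real \<Rightarrow> bool" where
  "const_diameter D \<delta> \<longleftrightarrow> sdiameter D = \<delta> \<and>
     (\<forall>p\<in>sboundary D. \<exists>p'\<in>sboundary D. sdist p p' = \<delta>)"

definition diametral_chord :: "R3 set \<Rightarrow> R3 set \<Rightarrow> bool" where
  "diametral_chord D C \<longleftrightarrow>
     (\<exists>p q. p \<in> D \<and> q \<in> D \<and> sdist p q = sdiameter D \<and> C = sarc p q)"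

end

theory Submission
  imports Defs
begin

lemma unit_inner_bounds:
  fixes x y :: R3
  assumes "norm x = 1" "norm y = 1"
  shows "-1 \<le> x \<bullet> y" "x \<bullet> y \<le> 1"
  using Cauchy_Schwarz_ineq2[of x y] assms by auto

lemma inner_eq1:
  fixes x y :: R3
  assumes "norm x = 1" "norm y = 1" "x \<bullet> y = 1"
  shows "x = y"
proof -
  have "(x - y) \<bullet> (x - y) = x \<bullet> x - 2 * (x \<bullet> y) + y \<bullet> y"
    by (simp add: inner_diff inner_commute)
  also have "\<dots> = 0" using assms by (simp add: dot_square_norm)
  finally show ?thesis by simp
qed

lemma inner_eqm1:
  fixes x y :: R3
  assumes "norm x = 1" "norm y = 1" "x \<bullet> y = -1"
  shows "x = - y"
  using inner_eq1[of x "-y"] assms by simp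

lemma sarc_mem:
  fixes x y z :: R3
  assumes "l \<ge> 0" "m \<ge> 0" "l + m > 0" "l *\<^sub>R x + m *\<^sub>R y = n *\<^sub>R z" "n > 0" "norm z = 1"
  shows "z \<in> sarc x y"
proof -
  define t where "t = m / (l + m)"
  have t0: "0 \<le> t" using assms(2,3) by (simp add: t_def)
  have t1: "t \<le> 1" using assms(1,3) by (simp add: t_def divide_le_eq)
  have t2: "1 - t = l / (l + m)" using assms(3) unfolding t_def by (simp add: field_simps)
  define v where "v = (1 - t) *\<^sub>R x + t *\<^sub>R y"
  have "v = (1 / (l + m)) *\<^sub>R (l *\<^sub>R x + m *\<^sub>R y)"
    unfolding v_def t2 unfolding t_def by (simp add: scaleR_add_right)
  also have "\<dots> = (n / (l + m)) *\<^sub>R z" using assms(4) by simp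
  finally have v: "v = (n / (l + m)) *\<^sub>R z" .
  have nv: "norm v = n / (l + m)" using v assms(3,5,6) by simp
  have e1: "v /\<^sub>R norm v = z" using v nv assms(3,5) by simp
  have e2: "v \<in> closed_segment x y" using t0 t1 unfolding closed_segment_def v_def by blast
  show ?thesis unfolding sarc_def using e1 e2 by force
qed

lemma sarc_left: "norm (x::R3) = 1 \<Longrightarrow> x \<in> sarc x y"
  unfolding sarc_def by (rule image_eqI[where x=x]) simp_all

lemma sarc_right: "norm (y::R3) = 1 \<Longrightarrow> y \<in> sarc x y"
  unfolding sarc_def by (rule image_eqI[where x=y]) simp_all

lemma sarc_commute: "sarc x y = sarc y x"
  unfolding sarc_def by (simp add: closed_segment_commute)

lemma tang:
  fixes p z :: R3
  assumes "norm p = 1" "norm z = 1"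
  shows "(p - (p \<bullet> z) *\<^sub>R z) \<bullet> z = 0"
    "norm (p - (p \<bullet> z) *\<^sub>R z) = sin (arccos (p \<bullet> z))"
proof -
  have oo: "z \<bullet> z = 1" using assms by (simp add: dot_square_norm)
  have pp: "p \<bullet> p = 1" using assms by (simp add: dot_square_norm)
  show "(p - (p \<bullet> z) *\<^sub>R z) \<bullet> z = 0" using oo by (simp add: inner_diff_left)
  have b: "\<bar>p \<bullet> z\<bar> \<le> 1" using unit_inner_bounds[OF assms] by auto
  have "(norm (p - (p \<bullet> z) *\<^sub>R z))^2 = (p - (p \<bullet> z) *\<^sub>R z) \<bullet> (p - (p \<bullet> z) *\<^sub>R z)"
    by (simp add: power2_norm_eq_inner)
  also have "\<dots> = 1 - (p \<bullet> z)^2"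
    using oo pp by (simp add: inner_diff_left inner_diff_right inner_commute power2_eq_square)
  finally have "norm (p - (p \<bullet> z) *\<^sub>R z) = sqrt (1 - (p \<bullet> z)^2)"
    by (metis norm_ge_zero real_sqrt_unique)
  then show "norm (p - (p \<bullet> z) *\<^sub>R z) = sin (arccos (p \<bullet> z))"
    using sin_arccos_abs[OF b] by simp
qed

lemma decomp:
  fixes p q z :: R3
  assumes "norm z = 1"
  shows "p \<bullet> q = (p \<bullet> z) * (z \<bullet> q) + (p - (p \<bullet> z) *\<^sub>R z) \<bullet> (q - (q \<bullet> z) *\<^sub>R z)"
proof -
  have oo: "z \<bullet> z = 1" using assms by (simp add: dot_square_norm)
  show ?thesis using oo by (simp add: inner_diff_left inner_diff_right inner_commute algebra_simps)
qed

lemma arcc_facts: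
  fixes p z :: R3
  assumes "norm p = 1" "norm z = 1"
  shows "cos (arccos (p \<bullet> z)) = p \<bullet> z" "0 \<le> arccos (p \<bullet> z)" "arccos (p \<bullet> z) \<le> pi"
    "0 \<le> sin (arccos (p \<bullet> z))"
  using unit_inner_bounds[OF assms] arccos_bounded[of "p \<bullet> z"] by (auto intro!: sin_ge_zero)

lemma sph_tri:
  fixes p q z :: R3
  assumes p: "norm p = 1" and q: "norm q = 1" and z: "norm z = 1"
  shows "arccos (p \<bullet> q) \<le> arccos (p \<bullet> z) + arccos (z \<bullet> q)"
proof -
  define A where "A = arccos (p \<bullet> z)"
  define B where "B = arccos (z \<bullet> q)"
  define P where "P = p - (p \<bullet> z) *\<^sub>R z"
  define Q where "Q = q - (q \<bullet> z) *\<^sub>R z"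
  have cA: "cos A = p \<bullet> z" and A0: "0 \<le> A" "A \<le> pi" using arcc_facts[OF p z] by (auto simp: A_def)
  have cB: "cos B = z \<bullet> q" and B0: "0 \<le> B" "B \<le> pi" using arcc_facts[OF z q] by (auto simp: B_def)
  have nP: "norm P = sin A" using tang[OF p z] by (simp add: P_def A_def)
  have nQ: "norm Q = sin B" using tang[OF q z] by (simp add: Q_def B_def inner_commute)
  have pq: "p \<bullet> q = cos A * cos B + P \<bullet> Q" using decomp[OF z, of p q] cA cB by (simp add: P_def Q_def)
  have "- (P \<bullet> Q) \<le> norm P * norm Q" using Cauchy_Schwarz_ineq2[of P Q] by linarith
  then have le: "cos (A + B) \<le> p \<bullet> q" using pq nP nQ by (simp add: cos_add)
  have b: "-1 \<le> p \<bullet> q" "p \<bullet> q \<le> 1" using unit_inner_bounds[OF p q] by auto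
  show ?thesis
  proof (cases "A + B \<le> pi")
    case True
    have "arccos (p \<bullet> q) \<le> arccos (cos (A + B))"
      by (rule arccos_le_arccos) (use le b in auto)
    also have "\<dots> = A + B" using True A0 B0 by (simp add: arccos_cos)
    finally show ?thesis by (simp add: A_def B_def)
  next
    case False
    then show ?thesis using arccos_ubound[OF b] by (simp add: A_def B_def)
  qed
qed

lemma sph_eq:
  fixes p q z :: R3
  assumes p: "norm p = 1" and q: "norm q = 1" and z: "norm z = 1" and pq: "p \<noteq> - q"
    and le: "arccos (p \<bullet> z) + arccos (z \<bullet> q) \<le> arccos (p \<bullet> q)"
  shows "z \<in> sarc p q"
proof -
  define A where "A = arccos (p \<bullet> z)"
  define B where "B = arccos (z \<bullet> q)"
  define T where "T = arccos (p \<bullet> q)"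
  define P where "P = p - (p \<bullet> z) *\<^sub>R z"
  define Q where "Q = q - (q \<bullet> z) *\<^sub>R z"
  have cA: "cos A = p \<bullet> z" and A0: "0 \<le> A" "A \<le> pi" and sA: "0 \<le> sin A"
    using arcc_facts[OF p z] by (auto simp: A_def)
  have cB: "cos B = z \<bullet> q" and B0: "0 \<le> B" "B \<le> pi" and sB: "0 \<le> sin B"
    using arcc_facts[OF z q] by (auto simp: B_def)
  have cT: "cos T = p \<bullet> q" and T0: "T \<le> pi" using arcc_facts[OF p q] by (auto simp: T_def)
  have b: "-1 \<le> p \<bullet> q" "p \<bullet> q \<le> 1" using unit_inner_bounds[OF p q] by auto
  have "p \<bullet> q \<noteq> -1" using inner_eqm1[OF p q] pq by auto
  then have "T \<noteq> pi" using arccos_eq_pi_iff[of "p \<bullet> q"] b by (auto simp: T_def)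
  with T0 have Tlt: "T < pi" by simp
  have ABT: "A + B \<le> T" using le by (simp add: A_def B_def T_def)
  have nP: "norm P = sin A" using tang[OF p z] by (simp add: P_def A_def)
  have nQ: "norm Q = sin B" using tang[OF q z] by (simp add: Q_def B_def inner_commute)
  have pqd: "p \<bullet> q = cos A * cos B + P \<bullet> Q" using decomp[OF z, of p q] cA cB by (simp add: P_def Q_def)
  have "cos T \<le> cos (A + B)" by (rule cos_monotone_0_pi_le) (use A0 B0 ABT Tlt in auto)
  then have PQ: "P \<bullet> Q \<le> - (sin A * sin B)" using cT pqd by (simp add: cos_add)
  have PP: "P \<bullet> P = (sin A)^2" and QQ: "Q \<bullet> Q = (sin B)^2"
    using nP nQ by (simp_all add: power2_norm_eq_inner[symmetric])
  have "(sin B *\<^sub>R P + sin A *\<^sub>R Q) \<bullet> (sin B *\<^sub>R P + sin A *\<^sub>R Q)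
      = (sin B)^2 * (P \<bullet> P) + (sin A)^2 * (Q \<bullet> Q) + 2 * sin A * sin B * (P \<bullet> Q)"
    by (simp add: inner_add_left inner_add_right inner_commute algebra_simps power2_eq_square)
  also have "\<dots> \<le> 0"
  proof -
    have "sin A * sin B * (P \<bullet> Q) \<le> sin A * sin B * (- (sin A * sin B))"
      using mult_left_mono[OF PQ mult_nonneg_nonneg[OF sA sB]] by simp
    then show ?thesis using PP QQ by (simp add: power2_eq_square algebra_simps)
  qed
  finally have "(sin B *\<^sub>R P + sin A *\<^sub>R Q) \<bullet> (sin B *\<^sub>R P + sin A *\<^sub>R Q) = 0"
    using inner_ge_zero[of "sin B *\<^sub>R P + sin A *\<^sub>R Q"] by linarith
  then have zero: "sin B *\<^sub>R P + sin A *\<^sub>R Q = 0" by simp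
  have comb: "sin B *\<^sub>R p + sin A *\<^sub>R q = sin (A + B) *\<^sub>R z"
  proof -
    have "sin B *\<^sub>R p + sin A *\<^sub>R q = (sin B * cos A + sin A * cos B) *\<^sub>R z + (sin B *\<^sub>R P + sin A *\<^sub>R Q)"
      using cA cB by (simp add: P_def Q_def algebra_simps inner_commute)
    then show ?thesis using zero by (simp add: sin_add algebra_simps)
  qed
  show ?thesis
  proof (cases "A + B = 0")
    case True
    then have "A = 0" using A0 B0 by simp
    then have "p \<bullet> z = 1" using cA by simp
    then have "p = z" using inner_eq1[OF p z] by simp
    then show ?thesis using sarc_left[OF p] by simp
  next
    case False
    then have pos: "0 < A + B" using A0 B0 by simp
    have sAB: "0 < sin (A + B)" by (rule sin_gt_zero) (use pos ABT Tlt in auto)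
    have "sin B + sin A > 0"
    proof (rule ccontr)
      assume "\<not> sin B + sin A > 0"
      then have "sin A = 0" "sin B = 0" using sA sB by auto
      then show False using sAB by (simp add: sin_add)
    qed
    then show ?thesis by (rule sarc_mem[OF sB sA _ comb sAB z])
  qed
qed

lemma sph_add:
  fixes p r z :: R3
  assumes p: "norm p = 1" and r: "norm r = 1" and z: "norm z = 1"
    and a: "a \<ge> 0" and g: "g \<ge> 0" and n: "n > 0" and eq: "a *\<^sub>R p + g *\<^sub>R r = n *\<^sub>R z"
  shows "arccos (p \<bullet> r) = arccos (p \<bullet> z) + arccos (z \<bullet> r)"
proof -
  define A where "A = arccos (p \<bullet> z)"
  define C where "C = arccos (z \<bullet> r)"
  define P where "P = p - (p \<bullet> z) *\<^sub>R z"
  define R where "R = r - (r \<bullet> z) *\<^sub>R z"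
  have cA: "cos A = p \<bullet> z" and A0: "0 \<le> A" "A \<le> pi" and sA: "0 \<le> sin A"
    using arcc_facts[OF p z] by (auto simp: A_def)
  have cC: "cos C = z \<bullet> r" and C0: "0 \<le> C" "C \<le> pi" and sC: "0 \<le> sin C"
    using arcc_facts[OF z r] by (auto simp: C_def)
  have nP: "norm P = sin A" using tang[OF p z] by (simp add: P_def A_def)
  have nR: "norm R = sin C" using tang[OF r z] by (simp add: R_def C_def inner_commute)
  have Pz: "P \<bullet> z = 0" using tang[OF p z] by (simp add: P_def)
  have Rz: "R \<bullet> z = 0" using tang[OF r z] by (simp add: R_def)
  have oo: "z \<bullet> z = 1" using z by (simp add: dot_square_norm)
  have split: "a *\<^sub>R p + g *\<^sub>R r = (a * cos A + g * cos C) *\<^sub>R z + (a *\<^sub>R P + g *\<^sub>R R)"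
    using cA cC by (simp add: P_def R_def algebra_simps inner_commute)
  have "n = (a *\<^sub>R p + g *\<^sub>R r) \<bullet> z" using eq oo by simp
  also have "\<dots> = a * cos A + g * cos C" unfolding split using Pz Rz oo
    by (simp add: inner_add_left)
  finally have nd: "n = a * cos A + g * cos C" .
  have zero: "a *\<^sub>R P + g *\<^sub>R R = 0" using split eq nd by simp
  have ag: "a + g > 0"
  proof (rule ccontr)
    assume "\<not> a + g > 0"
    then have "a = 0" "g = 0" using a g by auto
    then show False using nd n by simp
  qed
  have naP: "a * sin A = g * sin C"
  proof -
    have "norm (a *\<^sub>R P) = norm (g *\<^sub>R R)" using zero by (metis add_eq_0_iff norm_minus_cancel)
    then show ?thesis using nP nR a g by simp
  qed
  have PR1: "a * (P \<bullet> R) = - (g * (R \<bullet> R))"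
  proof -
    have "a *\<^sub>R P = - (g *\<^sub>R R)" using zero by (simp add: add_eq_0_iff)
    then have "(a *\<^sub>R P) \<bullet> R = (- (g *\<^sub>R R)) \<bullet> R" by simp
    then show ?thesis by simp
  qed
  have PR2: "g * (P \<bullet> R) = - (a * (P \<bullet> P))"
  proof -
    have "g *\<^sub>R R = - (a *\<^sub>R P)" using zero by (simp add: add_eq_0_iff2 add.commute)
    then have "P \<bullet> (g *\<^sub>R R) = P \<bullet> (- (a *\<^sub>R P))" by simp
    then show ?thesis by simp
  qed
  have RR: "R \<bullet> R = (sin C)^2" and PP: "P \<bullet> P = (sin A)^2"
    using nR nP by (simp_all add: power2_norm_eq_inner[symmetric])
  have k1: "a * (P \<bullet> R + sin A * sin C) = 0"
    using PR1 RR naP by (simp add: algebra_simps power2_eq_square)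
  have k2: "g * (P \<bullet> R + sin A * sin C) = 0"
    using PR2 PP naP by (simp add: algebra_simps power2_eq_square)
  have PR: "P \<bullet> R = - (sin A * sin C)"
  proof -
    have "(a + g) * (P \<bullet> R + sin A * sin C) = 0" using k1 k2 by (simp add: algebra_simps)
    then show ?thesis using ag by simp
  qed
  have pr: "p \<bullet> r = cos (A + C)"
    using decomp[OF z, of p r] cA cC PR by (simp add: P_def R_def cos_add)
  have s1: "sin A * n = g * sin (A + C)" using nd naP by (simp add: sin_add algebra_simps)
  have s2: "sin C * n = a * sin (A + C)" using nd naP by (simp add: sin_add algebra_simps)
  have "(a + g) * sin (A + C) = (sin A + sin C) * n" using s1 s2 by (simp add: algebra_simps)
  moreover have "(sin A + sin C) * n \<ge> 0" using sA sC n by simp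
  ultimately have "0 \<le> (a + g) * sin (A + C)" by simp
  then have sACnn: "sin (A + C) \<ge> 0" using ag by (simp add: zero_le_mult_iff)
  have ACle: "A + C \<le> pi"
  proof (rule ccontr)
    assume gt: "\<not> A + C \<le> pi"
    show False
    proof (cases "A + C < 2 * pi")
      case True
      then show False using sin_lt_zero[of "A + C"] gt sACnn by simp
    next
      case False
      then have "A = pi" "C = pi" using A0 C0 by auto
      then have "n = - (a + g)" using nd by simp
      then show False using n ag by simp
    qed
  qed
  have "arccos (p \<bullet> r) = A + C" using pr ACle A0 C0 by (simp add: arccos_cos)
  then show ?thesis by (simp add: A_def C_def)
qed

lemma zero_comb:
  fixes x y :: R3
  assumes "norm x = 1" "norm y = 1" "x \<noteq> - y" "l \<ge> 0" "m \<ge> 0" "l *\<^sub>R x + m *\<^sub>R y = 0"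
  shows "l = 0 \<and> m = 0"
proof -
  have e: "l *\<^sub>R x = - (m *\<^sub>R y)" using assms(6) by (simp add: add_eq_0_iff)
  then have "norm (l *\<^sub>R x) = norm (m *\<^sub>R y)" by (metis norm_minus_cancel)
  then have lm: "l = m" using assms by simp
  show ?thesis
  proof (cases "l = 0")
    case True then show ?thesis using lm by simp
  next
    case False
    then have "x = - y" using e lm by (metis scaleR_cancel_left scaleR_minus_right)
    then show ?thesis using assms(3) by simp
  qed
qed

lemma arccos_pos:
  fixes x y :: R3
  assumes "norm x = 1" "norm y = 1" "x \<noteq> y"
  shows "arccos (x \<bullet> y) > 0"
proof -
  have b: "x \<bullet> y \<in> {-1..1}" using unit_inner_bounds[OF assms(1,2)] by auto
  have "x \<bullet> y \<noteq> 1" using inner_eq1[OF assms(1,2)] assms(3) by auto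
  then have "arccos (x \<bullet> y) \<noteq> 0" using arccos_eq_0_iff[OF b] by simp
  moreover have "arccos (x \<bullet> y) \<ge> 0" using b by (simp add: arccos_lbound)
  ultimately show ?thesis by simp
qed

locale sph =
  fixes D :: "R3 set" and \<delta> :: real
  assumes unit: "x \<in> D \<Longrightarrow> norm x = 1"
    and noanti: "x \<in> D \<Longrightarrow> - x \<notin> D"
    and conv: "x \<in> D \<Longrightarrow> y \<in> D \<Longrightarrow> sarc x y \<subseteq> D"
    and diam: "x \<in> D \<Longrightarrow> y \<in> D \<Longrightarrow> sdist x y \<le> \<delta>"
begin

lemma notanti: "x \<in> D \<Longrightarrow> y \<in> D \<Longrightarrow> x \<noteq> - y"
  using noanti by auto

lemma ext_case:
  assumes D: "p \<in> D" "q \<in> D" "r \<in> D" "s \<in> D" and pq: "sdist p q = \<delta>"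
    and disj: "sarc p q \<inter> sarc r s = {}"
    and rel: "a *\<^sub>R p + b *\<^sub>R q + c *\<^sub>R r + e *\<^sub>R s = 0"
    and a: "a > 0" and b: "b < 0" and c: "c \<ge> 0" and e: "e \<ge> 0" and neq: "p \<noteq> q"
  shows False
proof (cases "c = 0 \<and> e = 0")
  case True
  then have "a *\<^sub>R p = (- b) *\<^sub>R q" using rel by (simp add: add_eq_0_iff)
  then have "norm (a *\<^sub>R p) = norm ((- b) *\<^sub>R q)" by simp
  then have "a = - b" using a b unit[OF D(1)] unit[OF D(2)] by simp
  then have "p = q" using \<open>a *\<^sub>R p = (- b) *\<^sub>R q\<close> a by simp
  then show False using neq by simp
next
  case False
  define v where "v = c *\<^sub>R r + e *\<^sub>R s"
  have "v \<noteq> 0"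
    using zero_comb[OF unit[OF D(3)] unit[OF D(4)] notanti[OF D(3,4)] c e] False by (auto simp: v_def)
  then have nv: "norm v > 0" by simp
  define w where "w = v /\<^sub>R norm v"
  have nw: "norm w = 1" using nv by (simp add: w_def)
  have vw: "v = norm v *\<^sub>R w" using nv by (simp add: w_def)
  have "w \<in> sarc r s"
    by (rule sarc_mem[OF c e _ _ nv nw]) (use False c e vw in \<open>auto simp: v_def\<close>)
  then have wD: "w \<in> D" using conv[OF D(3,4)] by auto
  have "q \<noteq> w" using \<open>w \<in> sarc r s\<close> disj sarc_right[OF unit[OF D(2)], of p] by auto
  have r2: "a *\<^sub>R p + b *\<^sub>R q + v = 0" using rel by (simp add: v_def add.assoc)
  have "a *\<^sub>R p + v = (a *\<^sub>R p + b *\<^sub>R q + v) - b *\<^sub>R q" by simp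
  also have "\<dots> = (- b) *\<^sub>R q" using r2 by simp
  finally have comb: "a *\<^sub>R p + norm v *\<^sub>R w = (- b) *\<^sub>R q" using vw by simp
  have "arccos (p \<bullet> w) = arccos (p \<bullet> q) + arccos (q \<bullet> w)"
    by (rule sph_add[OF unit[OF D(1)] nw unit[OF D(2)] _ _ _ comb]) (use a b nv in auto)
  moreover have "arccos (q \<bullet> w) > 0" by (rule arccos_pos[OF unit[OF D(2)] nw \<open>q \<noteq> w\<close>])
  moreover have "arccos (p \<bullet> w) \<le> \<delta>" using diam[OF D(1) wD] by (simp add: sdist_def)
  ultimately show False using pq by (simp add: sdist_def)
qed


lemma cross_case:
  assumes D: "p \<in> D" "q \<in> D" "r \<in> D" "s \<in> D" and pq: "sdist p q = \<delta>" and rs: "sdist r s = \<delta>"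
    and disj: "sarc p q \<inter> sarc r s = {}"
    and rel: "a *\<^sub>R p + b *\<^sub>R q + c *\<^sub>R r + e *\<^sub>R s = 0"
    and a: "a > 0" and b: "b < 0" and c: "c > 0" and e: "e < 0"
  shows False
proof -
  note u = unit[OF D(1)] unit[OF D(2)] unit[OF D(3)] unit[OF D(4)]
  define v where "v = a *\<^sub>R p + c *\<^sub>R r"
  have "v \<noteq> 0"
  proof
    assume "v = 0"
    then show False using zero_comb[OF u(1) u(3) notanti[OF D(1,3)], of a c] a c by (simp add: v_def)
  qed
  then have nv: "norm v > 0" by simp
  define z where "z = v /\<^sub>R norm v"
  have nz: "norm z = 1" using nv by (simp add: z_def)
  have vz: "v = norm v *\<^sub>R z" using nv by (simp add: z_def)
  have e1: "a *\<^sub>R p + c *\<^sub>R r = norm v *\<^sub>R z" using vz by (simp add: v_def)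
  have "v = (a *\<^sub>R p + b *\<^sub>R q + c *\<^sub>R r + e *\<^sub>R s) - b *\<^sub>R q - e *\<^sub>R s"
    by (simp add: v_def algebra_simps)
  also have "\<dots> = (- b) *\<^sub>R q + (- e) *\<^sub>R s" using rel by simp
  finally have e2: "(- b) *\<^sub>R q + (- e) *\<^sub>R s = norm v *\<^sub>R z" using vz by simp
  have A1: "arccos (p \<bullet> r) = arccos (p \<bullet> z) + arccos (z \<bullet> r)"
    by (rule sph_add[OF u(1) u(3) nz _ _ nv e1]) (use a c in auto)
  have A2: "arccos (q \<bullet> s) = arccos (q \<bullet> z) + arccos (z \<bullet> s)"
    by (rule sph_add[OF u(2) u(4) nz _ _ nv e2]) (use b e in auto)
  have T1: "arccos (p \<bullet> q) \<le> arccos (p \<bullet> z) + arccos (z \<bullet> q)" by (rule sph_tri[OF u(1) u(2) nz])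
  have T2: "arccos (r \<bullet> s) \<le> arccos (r \<bullet> z) + arccos (z \<bullet> s)" by (rule sph_tri[OF u(3) u(4) nz])
  have d1: "arccos (p \<bullet> r) \<le> \<delta>" using diam[OF D(1) D(3)] by (simp add: sdist_def)
  have d2: "arccos (q \<bullet> s) \<le> \<delta>" using diam[OF D(2) D(4)] by (simp add: sdist_def)
  have c1: "arccos (z \<bullet> q) = arccos (q \<bullet> z)" "arccos (r \<bullet> z) = arccos (z \<bullet> r)"
    by (simp_all add: inner_commute)
  have E1: "arccos (p \<bullet> z) + arccos (z \<bullet> q) \<le> arccos (p \<bullet> q)"
    using A1 A2 T1 T2 d1 d2 pq rs c1 by (simp add: sdist_def)
  have E2: "arccos (r \<bullet> z) + arccos (z \<bullet> s) \<le> arccos (r \<bullet> s)"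
    using A1 A2 T1 T2 d1 d2 pq rs c1 by (simp add: sdist_def)
  have "z \<in> sarc p q" by (rule sph_eq[OF u(1) u(2) nz notanti[OF D(1,2)] E1])
  moreover have "z \<in> sarc r s" by (rule sph_eq[OF u(3) u(4) nz notanti[OF D(3,4)] E2])
  ultimately show False using disj by auto
qed

lemma core:
  assumes D: "p \<in> D" "q \<in> D" "r \<in> D" "s \<in> D" and pq: "sdist p q = \<delta>" and rs: "sdist r s = \<delta>"
    and disj: "sarc p q \<inter> sarc r s = {}"
    and rel: "a *\<^sub>R p + b *\<^sub>R q + c *\<^sub>R r + e *\<^sub>R s = 0"
    and a: "a > 0" and b: "b < 0" and neq: "p \<noteq> q"
  shows False
proof -
  consider "c \<ge> 0 \<and> e \<ge> 0" | "c \<le> 0 \<and> e \<le> 0" | "c > 0 \<and> e < 0" | "c < 0 \<and> e > 0" by linarith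
  then show False
  proof cases
    case 1 then show ?thesis using ext_case[OF D pq disj rel a b] neq by auto
  next
    case 2
    have rel': "(- b) *\<^sub>R q + (- a) *\<^sub>R p + (- c) *\<^sub>R r + (- e) *\<^sub>R s = 0"
    proof -
      have "(- b) *\<^sub>R q + (- a) *\<^sub>R p + (- c) *\<^sub>R r + (- e) *\<^sub>R s
          = - (a *\<^sub>R p + b *\<^sub>R q + c *\<^sub>R r + e *\<^sub>R s)" by (simp add: algebra_simps)
      then show ?thesis using rel by simp
    qed
    have pq': "sdist q p = \<delta>" using pq by (simp add: sdist_def inner_commute)
    have disj': "sarc q p \<inter> sarc r s = {}" using disj by (simp add: sarc_commute)
    show ?thesis using ext_case[OF D(2,1,3,4) pq' disj' rel'] 2 a b neq by auto
  next
    case 3 then show ?thesis using cross_case[OF D pq rs disj rel a b] by auto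
  next
    case 4
    have rel': "a *\<^sub>R p + b *\<^sub>R q + e *\<^sub>R s + c *\<^sub>R r = 0" using rel by (simp add: algebra_simps)
    have rs': "sdist s r = \<delta>" using rs by (simp add: sdist_def inner_commute)
    have disj': "sarc p q \<inter> sarc s r = {}" using disj by (simp add: sarc_commute)
    show ?thesis using cross_case[OF D(1,2,4,3) pq rs' disj' rel' a b] 4 by auto
  qed
qed

lemma samesign:
  assumes D: "p \<in> D" "q \<in> D" "r \<in> D" "s \<in> D"
    and disj: "sarc p q \<inter> sarc r s = {}"
    and rel: "a *\<^sub>R p + b *\<^sub>R q + c *\<^sub>R r + e *\<^sub>R s = 0"
    and nz: "a \<noteq> 0 \<or> b \<noteq> 0 \<or> c \<noteq> 0 \<or> e \<noteq> 0"
    and a: "a \<ge> 0" and b: "b \<ge> 0" and ce: "(c \<ge> 0 \<and> e \<ge> 0) \<or> (c \<le> 0 \<and> e \<le> 0)"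
  shows False
proof -
  note u = unit[OF D(1)] unit[OF D(2)] unit[OF D(3)] unit[OF D(4)]
  define v where "v = a *\<^sub>R p + b *\<^sub>R q"
  have rv: "c *\<^sub>R r + e *\<^sub>R s = - v"
  proof -
    have "c *\<^sub>R r + e *\<^sub>R s = (a *\<^sub>R p + b *\<^sub>R q + c *\<^sub>R r + e *\<^sub>R s) - v" by (simp add: v_def)
    then show ?thesis using rel by simp
  qed
  show False
  proof (cases "a = 0 \<and> b = 0")
    case True
    then have v0: "v = 0" by (simp add: v_def)
    have "c = 0 \<and> e = 0"
    proof (cases "c \<ge> 0 \<and> e \<ge> 0")
      case True then show ?thesis using zero_comb[OF u(3) u(4) notanti[OF D(3,4)]] rv v0 by auto
    next
      case False
      then have "- c \<ge> 0" "- e \<ge> 0" using ce by auto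
      moreover have "(- c) *\<^sub>R r + (- e) *\<^sub>R s = 0"
      proof -
        have h: "(- c) *\<^sub>R r + (- e) *\<^sub>R s = - (c *\<^sub>R r + e *\<^sub>R s)" by simp
        show ?thesis unfolding h rv v0 by simp
      qed
      ultimately have "- c = 0 \<and> - e = 0" by (rule zero_comb[OF u(3) u(4) notanti[OF D(3,4)]])
      then show ?thesis by simp
    qed
    then show False using True nz by simp
  next
    case False
    have "v \<noteq> 0" using zero_comb[OF u(1) u(2) notanti[OF D(1,2)] a b] False by (auto simp: v_def)
    then have nv: "norm v > 0" by simp
    define w where "w = v /\<^sub>R norm v"
    have nw: "norm w = 1" using nv by (simp add: w_def)
    have vw: "v = norm v *\<^sub>R w" using nv by (simp add: w_def)
    have "w \<in> sarc p q"
      by (rule sarc_mem[OF a b _ _ nv nw]) (use False a b vw in \<open>auto simp: v_def\<close>)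
    then have wD: "w \<in> D" using conv[OF D(1,2)] by auto
    show False
    proof (cases "c \<ge> 0 \<and> e \<ge> 0")
      case True
      have ce0: "c + e > 0"
      proof (rule ccontr)
        assume "\<not> c + e > 0" then have "c = 0" "e = 0" using True by auto
        then show False using rv \<open>v \<noteq> 0\<close> by simp
      qed
      have "c *\<^sub>R r + e *\<^sub>R s = norm v *\<^sub>R (- w)" using rv vw by (metis scaleR_minus_right)
      then have "- w \<in> sarc r s" using sarc_mem[of c e r s "norm v" "- w"] True ce0 nv nw by auto
      then have "- w \<in> D" using conv[OF D(3,4)] by auto
      then show False using noanti[OF wD] by simp
    next
      case False
      then have ce': "- c \<ge> 0" "- e \<ge> 0" using ce by auto
      have ce0: "- c + - e > 0"
      proof (rule ccontr)
        assume "\<not> - c + - e > 0" then have "c = 0" "e = 0" using ce' by auto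
        then show False using rv \<open>v \<noteq> 0\<close> by simp
      qed
      have h: "(- c) *\<^sub>R r + (- e) *\<^sub>R s = - (c *\<^sub>R r + e *\<^sub>R s)" by simp
      have "(- c) *\<^sub>R r + (- e) *\<^sub>R s = norm v *\<^sub>R w" unfolding h rv using vw by simp
      then have "w \<in> sarc r s" using sarc_mem[of "- c" "- e" r s "norm v" w] ce' ce0 nv nw by auto
      then show False using \<open>w \<in> sarc p q\<close> disj by auto
    qed
  qed
qed



lemma zero_diam:
  assumes "x \<in> D" "y \<in> D" "\<delta> = 0" shows "x = y"
proof (rule ccontr)
  assume "x \<noteq> y"
  then have "arccos (x \<bullet> y) > 0" using arccos_pos unit assms(1,2) by blast
  then show False using diam[OF assms(1,2)] assms(3) by (simp add: sdist_def)
qed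

lemma main:
  assumes D: "p \<in> D" "q \<in> D" "r \<in> D" "s \<in> D" and pq: "sdist p q = \<delta>" and rs: "sdist r s = \<delta>"
  shows "sarc p q \<inter> sarc r s \<noteq> {}"
proof (rule ccontr)
  assume "\<not> sarc p q \<inter> sarc r s \<noteq> {}"
  then have disj: "sarc p q \<inter> sarc r s = {}" by simp
  note u = unit[OF D(1)] unit[OF D(2)] unit[OF D(3)] unit[OF D(4)]
  have ends: "p \<in> sarc p q" "q \<in> sarc p q" "r \<in> sarc r s" "s \<in> sarc r s"
    using sarc_left sarc_right u by auto
  have pp1: "p \<bullet> p = 1" "r \<bullet> r = 1" using u by (simp_all add: dot_square_norm)
  have "p \<noteq> q"
  proof
    assume "p = q"
    then have "\<delta> = 0" using pq pp1 by (simp add: sdist_def)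
    then have "p = r" using zero_diam D by blast
    then show False using ends disj by blast
  qed
  have "r \<noteq> s"
  proof
    assume "r = s"
    then have "\<delta> = 0" using rs pp1 by (simp add: sdist_def)
    then have "p = r" using zero_diam D by blast
    then show False using ends disj by blast
  qed
  have "p \<noteq> r" "p \<noteq> s" "q \<noteq> r" "q \<noteq> s" using ends disj by blast+
  then have dist: "distinct [p,q,r,s]" using \<open>p \<noteq> q\<close> \<open>r \<noteq> s\<close> by auto
  have "dependent {p,q,r,s}" by (rule dependent_biggerset) (use dist in simp)
  then obtain uu where uu: "\<exists>v\<in>{p,q,r,s}. uu v \<noteq> 0" "(\<Sum>v\<in>{p,q,r,s}. uu v *\<^sub>R v) = 0"
    using dependent_finite[of "{p,q,r,s}"] by auto
  define a where "a = uu p"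
  define b where "b = uu q"
  define c where "c = uu r"
  define e where "e = uu s"
  have rel: "a *\<^sub>R p + b *\<^sub>R q + c *\<^sub>R r + e *\<^sub>R s = 0"
    using uu(2) dist by (simp add: a_def b_def c_def e_def add.assoc)
  have nz: "a \<noteq> 0 \<or> b \<noteq> 0 \<or> c \<noteq> 0 \<or> e \<noteq> 0"
    using uu(1) by (auto simp: a_def b_def c_def e_def)
  have neg: "(- a) *\<^sub>R p + (- b) *\<^sub>R q + (- c) *\<^sub>R r + (- e) *\<^sub>R s = 0"
  proof -
    have "(- a) *\<^sub>R p + (- b) *\<^sub>R q + (- c) *\<^sub>R r + (- e) *\<^sub>R s
        = - (a *\<^sub>R p + b *\<^sub>R q + c *\<^sub>R r + e *\<^sub>R s)" by (simp add: algebra_simps)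
    then show ?thesis using rel by simp
  qed
  have swp: "c *\<^sub>R r + e *\<^sub>R s + a *\<^sub>R p + b *\<^sub>R q = 0" using rel by (simp add: algebra_simps)
  have swpn: "(- c) *\<^sub>R r + (- e) *\<^sub>R s + (- a) *\<^sub>R p + (- b) *\<^sub>R q = 0" using neg by (simp add: algebra_simps)
  have disj2: "sarc r s \<inter> sarc p q = {}" using disj by blast
  have nz2: "c \<noteq> 0 \<or> e \<noteq> 0 \<or> a \<noteq> 0 \<or> b \<noteq> 0" using nz by auto
  consider "a > 0 \<and> b < 0" | "a < 0 \<and> b > 0" | "c > 0 \<and> e < 0" | "c < 0 \<and> e > 0"
    | "a \<ge> 0 \<and> b \<ge> 0 \<and> ((c \<ge> 0 \<and> e \<ge> 0) \<or> (c \<le> 0 \<and> e \<le> 0))"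
    | "a \<le> 0 \<and> b \<le> 0 \<and> ((c \<ge> 0 \<and> e \<ge> 0) \<or> (c \<le> 0 \<and> e \<le> 0))"
    by linarith
  then show False
  proof cases
    case 1 then show ?thesis using core[OF D pq rs disj rel] \<open>p \<noteq> q\<close> by auto
  next
    case 2 then show ?thesis using core[OF D pq rs disj neg] \<open>p \<noteq> q\<close> by auto
  next
    case 3 then show ?thesis using core[OF D(3,4,1,2) rs pq disj2 swp] \<open>r \<noteq> s\<close> by auto
  next
    case 4 then show ?thesis using core[OF D(3,4,1,2) rs pq disj2 swpn] \<open>r \<noteq> s\<close> by auto
  next
    case 5 then show ?thesis using samesign[OF D disj rel nz] by auto
  next
    case 6
    have "- a \<ge> 0" "- b \<ge> 0" "((- c \<ge> 0 \<and> - e \<ge> 0) \<or> (- c \<le> 0 \<and> - e \<le> 0))" using 6 by auto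
    moreover have "- a \<noteq> 0 \<or> - b \<noteq> 0 \<or> - c \<noteq> 0 \<or> - e \<noteq> 0" using nz by auto
    ultimately show ?thesis using samesign[OF D disj neg] by blast
  qed
qed


end

theorem proposition2:
  fixes D :: "R3 set" and \<delta> :: real
  assumes "sconvex_body D" and "const_diameter D \<delta>"
    and "diametral_chord D C1" and "diametral_chord D C2"
  shows "C1 \<inter> C2 \<noteq> {}"
proof -
  have sc: "D \<subseteq> S2" "no_antipodes D" "\<And>a b. a \<in> D \<Longrightarrow> b \<in> D \<Longrightarrow> sarc a b \<subseteq> D"
    using assms(1) unfolding sconvex_body_def sconvex_def by auto
  have un: "\<And>x. x \<in> D \<Longrightarrow> norm x = 1" using sc(1) by (auto simp: S2_def)
  have dm: "sdist x y \<le> sdiameter D" if "x \<in> D" "y \<in> D" for x y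
    unfolding sdiameter_def
  proof (rule cSup_upper)
    show "sdist x y \<in> {sdist p q |p q. p \<in> D \<and> q \<in> D}" using that by blast
    show "bdd_above {sdist p q |p q. p \<in> D \<and> q \<in> D}"
    proof (rule bdd_aboveI[where M = pi])
      fix t assume "t \<in> {sdist p q |p q. p \<in> D \<and> q \<in> D}"
      then obtain p q where "t = sdist p q" "p \<in> D" "q \<in> D" by blast
      then show "t \<le> pi" using unit_inner_bounds[OF un un] arccos_ubound by (simp add: sdist_def)
    qed
  qed
  interpret sph D "sdiameter D"
    by unfold_locales (use un sc dm in \<open>auto simp: no_antipodes_def\<close>)
  obtain p q where pq: "p \<in> D" "q \<in> D" "sdist p q = sdiameter D" "C1 = sarc p q"
    using assms(3) unfolding diametral_chord_def by blast
  obtain r s where rs: "r \<in> D" "s \<in> D" "sdist r s = sdiameter D" "C2 = sarc r s"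
    using assms(4) unfolding diametral_chord_def by blast
  show ?thesis using main[OF pq(1,2) rs(1,2) pq(3) rs(3)] pq(4) rs(4) by simp
qed

end
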